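(* Let $3\le w<n$ and suppose a Steiner system $S(3,w,n)$ exists. Then $$q'_0(3,w,n)=\min_{S}\ \max_{D\in S'}\ \chi(D)+1,$$ where the minimum is over all Steiner systems $S$ of type $S(3,w,n)$ and, for each such $S$, $S'$ denotes the set of all $S(2,w-1,n-1)$ systems derived from $S$ (one for each point of $S$).
   Context: $\mathbb{Z}_q=\{0,\dots,q-1\}$ (an alphabet); $\mathrm{wt}$ = number of nonzero coordinates; $d$ = Hamming distance; $J_q(n,w)$ = weight-$w$ words of $\mathbb{Z}_q^n$. An $(n,w,d)_q$ code of size $M$ is a subset $C\subseteq J_q(n,w)$ with $|C|=M$ and pairwise distances at least $d$. A Steiner system $S(t,k,n)$ is a pair $(N,B)$, $|N|=n$, $B$ a set of $k$-subsets (blocks) of $N$ with every $t$-subset of $N$ in exactly one block. For $\alpha\subset N$ with $0<|\alpha|<t$, the derived system is $(N\setminus\alpha,\{\beta\setminus\alpha:\alpha\subseteq\beta\in B\})$, an $S(t-|\alpha|,k-|\alpha|,n-|\alpha|)$. For a Steiner system $S(t,k,n)$, $\chi(S)$ is the minimum number of classes in a partition of its block set such that any two distinct blocks in the same class intersect in at most $t-2$ points (chromatic number of the graph on blocks where two blocks are adjacent iff they share exactly $t-1$ points); for $t=2$ this means blocks in the same class are pairwise disjoint. For $t,k,n$ such that an $S(t,k,n)$ exists, $q'_0(t,k,n)$ is the smallest $q$ for which an $(n,k,2k-t+1)_q$ code of size $\binom{n}{t}/\binom{k}{t}$ exists. *)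

theory Defs
  imports Main
begin

definition wt :: "nat list \<Rightarrow> nat" where
  "wt x = card {i. i < length x \<and> x ! i \<noteq> 0}"

definition hdist :: "nat list \<Rightarrow> nat list \<Rightarrow> nat" where
  "hdist x y = card {i. i < length x \<and> x ! i \<noteq> y ! i}"

definition J :: "nat \<Rightarrow> nat \<Rightarrow> nat \<Rightarrow> nat list set" where
  "J q n w = {x. length x = n \<and> set x \<subseteq> {0..<q} \<and> wt x = w}"

definition is_code :: "nat \<Rightarrow> nat \<Rightarrow> nat \<Rightarrow> nat \<Rightarrow> nat \<Rightarrow> nat list set \<Rightarrow> bool" where
  "is_code q n w d M C \<longleftrightarrow> C \<subseteq> J q n w \<and> finite C \<and> card C = M \<and>
     (\<forall>x\<in>C. \<forall>y\<in>C. x \<noteq> y \<longrightarrow> d \<le> hdist x y)"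

definition steiner :: "nat \<Rightarrow> nat \<Rightarrow> nat \<Rightarrow> 'a set \<Rightarrow> 'a set set \<Rightarrow> bool" where
  "steiner t k n N B \<longleftrightarrow> finite N \<and> card N = n \<and>
     (\<forall>b\<in>B. b \<subseteq> N \<and> card b = k) \<and>
     (\<forall>T. T \<subseteq> N \<and> card T = t \<longrightarrow> (\<exists>!b. b \<in> B \<and> T \<subseteq> b))"

definition derived_blocks :: "'a set set \<Rightarrow> 'a \<Rightarrow> 'a set set" where
  "derived_blocks B x = {b - {x} | b. b \<in> B \<and> x \<in> b}"

definition chi :: "nat \<Rightarrow> 'a set set \<Rightarrow> nat" where
  "chi t B = (LEAST m. \<exists>f :: 'a set \<Rightarrow> nat. (\<forall>b\<in>B. f b < m) \<and>
      (\<forall>b\<in>B. \<forall>b'\<in>B. b \<noteq> b' \<and> f b = f b' \<longrightarrow> card (b \<inter> b') \<le> t - 2))"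

definition q0' :: "nat \<Rightarrow> nat \<Rightarrow> nat \<Rightarrow> nat" where
  "q0' t k n = (LEAST q. \<exists>C. is_code q n k (2 * k - t + 1) ((n choose t) div (k choose t)) C)"

end

theory Submission
  imports Defs
begin

definition supp :: "nat list \<Rightarrow> nat set" where
  "supp x = {i. i < length x \<and> x ! i \<noteq> 0}"

lemma wt_supp: "wt x = card (supp x)" by (simp add: wt_def supp_def)

lemma chi_witness:
  assumes "finite D"
  shows "\<exists>f :: 'a set \<Rightarrow> nat. (\<forall>b\<in>D. f b < chi t D) \<and>
     (\<forall>b\<in>D. \<forall>b'\<in>D. b \<noteq> b' \<and> f b = f b' \<longrightarrow> card (b \<inter> b') \<le> t - 2)"
proof -
  obtain f :: "'a set \<Rightarrow> nat" and m where fm: "f ` D = {i. i < m}" "inj_on f D"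
    using finite_imp_inj_to_nat_seg[OF assms] by blast
  have "(\<forall>b\<in>D. f b < m) \<and> (\<forall>b\<in>D. \<forall>b'\<in>D. b \<noteq> b' \<and> f b = f b' \<longrightarrow> card (b \<inter> b') \<le> t - 2)"
    using fm by (auto simp: inj_on_def)
  hence "\<exists>m. \<exists>f :: 'a set \<Rightarrow> nat. (\<forall>b\<in>D. f b < m) \<and>
     (\<forall>b\<in>D. \<forall>b'\<in>D. b \<noteq> b' \<and> f b = f b' \<longrightarrow> card (b \<inter> b') \<le> t - 2)" by blast
  thus ?thesis unfolding chi_def by (rule LeastI_ex)
qed

lemma chi_le:
  fixes f :: "'a set \<Rightarrow> nat"
  assumes "\<forall>b\<in>D. f b < m" "\<forall>b\<in>D. \<forall>b'\<in>D. b \<noteq> b' \<and> f b = f b' \<longrightarrow> card (b \<inter> b') \<le> t - 2"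
  shows "chi t D \<le> m"
  unfolding chi_def using assms by (intro Least_le) blast

lemma pack_count:
  fixes N :: "'a set"
  assumes N: "finite N" and Bs: "\<forall>b\<in>B. b \<subseteq> N \<and> card b = k"
    and I: "\<forall>b\<in>B. \<forall>b'\<in>B. b \<noteq> b' \<longrightarrow> card (b \<inter> b') < t"
  shows "card (snd ` (SIGMA b:B. {T. T \<subseteq> b \<and> card T = t})) = card B * (k choose t)"
    "snd ` (SIGMA b:B. {T. T \<subseteq> b \<and> card T = t}) \<subseteq> {T. T \<subseteq> N \<and> card T = t}"
proof -
  define S where "S = (SIGMA b:B. {T. T \<subseteq> b \<and> card T = t})"
  have "B \<subseteq> Pow N" using Bs by blast
  hence fB: "finite B" using N by (simp add: finite_subset)
  have inj: "inj_on snd S"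
  proof (rule inj_onI)
    fix p p' assume pS: "p \<in> S" "p' \<in> S" and e: "snd p = snd p'"
    obtain b T where pp: "p = (b,T)" by (cases p)
    obtain b' T' where pp': "p' = (b',T')" by (cases p')
    have h: "b\<in>B" "T \<subseteq> b" "card T = t" using pS(1) unfolding S_def pp by simp_all
    have h': "b'\<in>B" "T' \<subseteq> b'" using pS(2) unfolding S_def pp' by simp_all
    have TT: "T' = T" using e pp pp' by simp
    have p: "p = (b,T)" "p' = (b',T)" "b\<in>B" "b'\<in>B" "T \<subseteq> b" "T \<subseteq> b'" "card T = t"
      using h h' pp pp' TT by auto
    have "b \<subseteq> N" using Bs p(3) by blast
    hence "finite (b \<inter> b')" using N by (simp add: finite_subset)
    hence "card T \<le> card (b\<inter>b')" using \<open>T\<subseteq>b\<close> \<open>T\<subseteq>b'\<close> by (intro card_mono) auto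
    hence "\<not> card (b\<inter>b') < t" using p(7) by simp
    hence "b = b'" using I p(3,4) by blast
    thus "p = p'" using p(1,2) by simp
  qed
  have "card S = (\<Sum>b\<in>B. card {T. T \<subseteq> b \<and> card T = t})" unfolding S_def
  proof (rule card_SigmaI[OF fB])
    show "\<forall>b\<in>B. finite {T. T \<subseteq> b \<and> card T = t}"
    proof
      fix b assume "b \<in> B"
      hence "b \<subseteq> N" using Bs by blast
      hence "finite b" using N by (simp add: finite_subset)
      thus "finite {T. T \<subseteq> b \<and> card T = t}" by simp
    qed
  qed
  also have "\<dots> = (\<Sum>b\<in>B. k choose t)" using Bs N
  proof (intro sum.cong refl)
    fix b assume "b \<in> B"
    hence "b \<subseteq> N" "card b = k" using Bs by auto
    hence "finite b" "card b = k" using N by (auto simp add: finite_subset)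
    thus "card {T. T \<subseteq> b \<and> card T = t} = k choose t" using n_subsets[of b t] by simp
  qed
  also have "\<dots> = card B * (k choose t)" by simp
  finally show "card (snd ` (SIGMA b:B. {T. T \<subseteq> b \<and> card T = t})) = card B * (k choose t)"
    using card_image[OF inj] unfolding S_def by simp
  show "snd ` (SIGMA b:B. {T. T \<subseteq> b \<and> card T = t}) \<subseteq> {T. T \<subseteq> N \<and> card T = t}"
    using Bs by fastforce
qed

lemma steiner_inter:
  assumes S: "steiner 3 k n N B" and bB: "b\<in>B" "b'\<in>B" "b\<noteq>b'" shows "card (b\<inter>b') < 3"
proof (rule ccontr)
  assume "\<not> ?thesis"
  hence "3 \<le> card (b\<inter>b')" by simp
  then obtain T where T: "T \<subseteq> b\<inter>b'" "card T = 3" by (rule obtain_subset_with_card_n)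
  have bN: "b \<subseteq> N" using S bB(1) unfolding steiner_def by blast
  have TN: "T \<subseteq> N" using T(1) bN by blast
  have U: "\<forall>T. T \<subseteq> N \<and> card T = 3 \<longrightarrow> (\<exists>!b. b \<in> B \<and> T \<subseteq> b)"
    using S unfolding steiner_def by (elim conjE)
  have "\<exists>!c. c \<in> B \<and> T \<subseteq> c" using U[rule_format, OF conjI[OF TN T(2)]] .
  then obtain c where "\<forall>y. y \<in> B \<and> T \<subseteq> y \<longrightarrow> y = c" by (rule ex1E) simp
  moreover have "b \<in> B \<and> T \<subseteq> b" "b' \<in> B \<and> T \<subseteq> b'" using T(1) bB by auto
  ultimately have "b = b'" by blast
  thus False using bB(3) by simp
qed

lemma steinerD:
  assumes "steiner t k n N B"
  shows "finite N" "card N = n" "\<forall>b\<in>B. b \<subseteq> N \<and> card b = k"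
    "\<And>T. T \<subseteq> N \<Longrightarrow> card T = t \<Longrightarrow> \<exists>b. b \<in> B \<and> T \<subseteq> b"
proof -
  show "finite N" "card N = n" "\<forall>b\<in>B. b \<subseteq> N \<and> card b = k"
    using assms unfolding steiner_def by simp_all
  have U: "\<forall>T. T \<subseteq> N \<and> card T = t \<longrightarrow> (\<exists>!b. b \<in> B \<and> T \<subseteq> b)"
    using assms unfolding steiner_def by (elim conjE)
  fix T assume "T \<subseteq> N" "card T = t"
  hence "\<exists>!b. b \<in> B \<and> T \<subseteq> b" using U by simp
  thus "\<exists>b. b \<in> B \<and> T \<subseteq> b" by (rule ex1_implies_ex)
qed

lemma steiner_card:
  assumes S: "steiner 3 k n N B" shows "card B * (k choose 3) = n choose 3"
proof -
  note N = steinerD(1,2)[OF S] and Bs = steinerD(3)[OF S]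
  have I: "\<forall>b\<in>B. \<forall>b'\<in>B. b \<noteq> b' \<longrightarrow> card (b \<inter> b') < 3" using steiner_inter[OF S] by blast
  note pc = pack_count[OF N(1) Bs I]
  have "{T. T \<subseteq> N \<and> card T = 3} \<subseteq> snd ` (SIGMA b:B. {T. T \<subseteq> b \<and> card T = 3})"
  proof
    fix T assume "T \<in> {T. T \<subseteq> N \<and> card T = 3}"
    hence T: "T \<subseteq> N" "card T = 3" by auto
    then obtain b where "b \<in> B" "T \<subseteq> b" using steinerD(4)[OF S] by blast
    thus "T \<in> snd ` (SIGMA b:B. {T. T \<subseteq> b \<and> card T = 3})" using T(2)
      by (intro image_eqI[of _ _ "(b,T)"]) auto
  qed
  with pc(2) have "snd ` (SIGMA b:B. {T. T \<subseteq> b \<and> card T = 3}) = {T. T \<subseteq> N \<and> card T = 3}" by (rule subset_antisym)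
  thus ?thesis using pc(1) n_subsets[OF N(1), of 3] N(2) by simp
qed

lemma steiner_of_pack:
  fixes N :: "'a set"
  assumes N: "finite N" "card N = n" and Bs: "\<forall>b\<in>B. b \<subseteq> N \<and> card b = k"
    and I: "\<forall>b\<in>B. \<forall>b'\<in>B. b \<noteq> b' \<longrightarrow> card (b \<inter> b') < 3"
    and c: "card B * (k choose 3) = n choose 3"
  shows "steiner 3 k n N B"
proof -
  note pc = pack_count[OF N(1) Bs I]
  have fin: "finite {T. T \<subseteq> N \<and> card T = 3}" using N(1) by simp
  have "card (snd ` (SIGMA b:B. {T. T \<subseteq> b \<and> card T = 3})) = card {T. T \<subseteq> N \<and> card T = 3}"
    using pc(1) c n_subsets[OF N(1), of 3] N(2) by simp
  hence E: "snd ` (SIGMA b:B. {T. T \<subseteq> b \<and> card T = 3}) = {T. T \<subseteq> N \<and> card T = 3}"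
    using card_subset_eq[OF fin pc(2)] by simp
  have cov: "\<exists>b. b \<in> B \<and> T \<subseteq> b" if "T \<subseteq> N" "card T = 3" for T
  proof -
    have "T \<in> snd ` (SIGMA b:B. {T. T \<subseteq> b \<and> card T = 3})" using that E by simp
    then obtain p where "p \<in> (SIGMA b:B. {T. T \<subseteq> b \<and> card T = 3})" "T = snd p" by (rule imageE)
    thus ?thesis by (cases p) auto
  qed
  have "\<forall>T. T \<subseteq> N \<and> card T = 3 \<longrightarrow> (\<exists>!b. b \<in> B \<and> T \<subseteq> b)"
  proof (intro allI impI)
    fix T assume T: "T \<subseteq> N \<and> card T = 3"
    then obtain b where b: "b \<in> B" "T \<subseteq> b" using cov by blast
    show "\<exists>!b. b \<in> B \<and> T \<subseteq> b"
    proof (rule ex1I[of _ b])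
      show "b \<in> B \<and> T \<subseteq> b" using b by simp
      fix b' assume b': "b' \<in> B \<and> T \<subseteq> b'"
      show "b' = b"
      proof (rule ccontr)
        assume "b' \<noteq> b"
        hence lt: "card (b' \<inter> b) < 3" using I b b' by blast
        have "b \<subseteq> N" using Bs b(1) by blast
        hence "finite (b' \<inter> b)" using N(1) by (simp add: finite_subset)
        hence "card T \<le> card (b' \<inter> b)" using b b' by (intro card_mono) auto
        thus False using lt T by simp
      qed
    qed
  qed
  thus ?thesis unfolding steiner_def using N Bs by blast
qed

lemma J_facts:
  assumes "x \<in> J q n w"
  shows "length x = n" "set x \<subseteq> {0..<q}" "card (supp x) = w" "supp x \<subseteq> {0..<n}" "finite (supp x)"
  using assms unfolding J_def supp_def wt_def by auto

lemma hdist_sub: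
  assumes "length x = n" "length y = n"
  shows "{i. i < length x \<and> x ! i \<noteq> y ! i} \<subseteq> supp x \<union> supp y"
  using assms unfolding supp_def by auto

lemma key1:
  assumes x: "x \<in> J q n w" and y: "y \<in> J q n w" and d: "2*w-2 \<le> hdist x y" and w: "3 \<le> w"
  shows "card (supp x \<inter> supp y) \<le> 2"
proof (rule ccontr)
  assume "\<not> ?thesis"
  hence s: "3 \<le> card (supp x \<inter> supp y)" by simp
  have u: "card (supp x \<union> supp y) + card (supp x \<inter> supp y) = 2*w"
    using card_Un_Int[OF J_facts(5)[OF x] J_facts(5)[OF y]] J_facts(3)[OF x] J_facts(3)[OF y] by simp
  have "hdist x y \<le> card (supp x \<union> supp y)" unfolding hdist_def
    by (rule card_mono) (use J_facts[OF x] J_facts[OF y] hdist_sub[of x n y] in auto)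
  thus False using u s d w by linarith
qed

lemma key2:
  assumes x: "x \<in> J q n w" and y: "y \<in> J q n w" and d: "2*w-2 \<le> hdist x y" and w: "3 \<le> w"
    and i: "i \<in> supp x \<inter> supp y" and s: "2 \<le> card (supp x \<inter> supp y)"
  shows "x ! i \<noteq> y ! i"
proof
  assume e: "x ! i = y ! i"
  have u: "card (supp x \<union> supp y) + card (supp x \<inter> supp y) = 2*w"
    using card_Un_Int[OF J_facts(5)[OF x] J_facts(5)[OF y]] J_facts(3)[OF x] J_facts(3)[OF y] by simp
  have "{i. i < length x \<and> x ! i \<noteq> y ! i} \<subseteq> (supp x \<union> supp y) - {i}"
    using hdist_sub[of x n y] J_facts(1)[OF x] J_facts(1)[OF y] e by auto
  hence "hdist x y \<le> card ((supp x \<union> supp y) - {i})" unfolding hdist_def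
    by (rule card_mono[rotated]) (use J_facts(5)[OF x] J_facts(5)[OF y] in simp)
  also have "\<dots> = card (supp x \<union> supp y) - 1" using i J_facts(5)[OF x] J_facts(5)[OF y] by simp
  finally show False using u s d w by linarith
qed

lemma derived_finite:
  assumes "steiner 3 w n {0..<n} B" shows "finite (derived_blocks B p)"
proof -
  have "derived_blocks B p \<subseteq> Pow {0..<n}"
    using steinerD(3)[OF assms] unfolding derived_blocks_def by blast
  thus ?thesis by (rule finite_subset) simp
qed

lemma derived_mem: "b \<in> B \<Longrightarrow> i \<in> b \<Longrightarrow> b - {i} \<in> derived_blocks B i"
  unfolding derived_blocks_def by blast

lemma code_from_steiner:
  assumes S: "steiner 3 w n {0..<n} B" and w: "3 \<le> w"
    and m: "\<forall>x<n. chi 2 (derived_blocks B x) \<le> m"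
  shows "\<exists>C. is_code (m+1) n w (2*w-3+1) (card B) C"
proof -
  define DB where "DB = derived_blocks B"
  have "\<forall>p. \<exists>f :: nat set \<Rightarrow> nat. (\<forall>d\<in>DB p. f d < chi 2 (DB p)) \<and>
     (\<forall>d\<in>DB p. \<forall>d'\<in>DB p. d \<noteq> d' \<and> f d = f d' \<longrightarrow> card (d \<inter> d') \<le> 2 - 2)"
    unfolding DB_def using derived_finite[OF S] chi_witness by blast
  then obtain F where F: "\<And>p. (\<forall>d\<in>DB p. F p d < chi 2 (DB p)) \<and>
     (\<forall>d\<in>DB p. \<forall>d'\<in>DB p. d \<noteq> d' \<and> F p d = F p d' \<longrightarrow> card (d \<inter> d') \<le> 2 - 2)"
    by metis
  define word where "word b = map (\<lambda>i. if i\<in>b then Suc (F i (b - {i})) else 0) [0..<n]" for b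
  have len: "length (word b) = n" for b unfolding word_def by simp
  have nth: "i < n \<Longrightarrow> word b ! i = (if i\<in>b then Suc (F i (b - {i})) else 0)" for b i
    unfolding word_def by simp
  note Bs = steinerD(3)[OF S]
  have suppw: "supp (word b) = b" if "b \<in> B" for b
  proof -
    have "b \<subseteq> {0..<n}" using Bs that by blast
    thus ?thesis unfolding supp_def using len nth by (auto split: if_splits)
  qed
  have inJ: "word b \<in> J (m+1) n w" if b: "b \<in> B" for b
  proof -
    have "set (word b) \<subseteq> {0..<m+1}"
    proof
      fix v assume "v \<in> set (word b)"
      then obtain i where i: "i < n" "v = word b ! i" using len by (metis in_set_conv_nth)
      show "v \<in> {0..<m+1}"
      proof (cases "i \<in> b")
        case True
        have "b - {i} \<in> DB i" unfolding DB_def using derived_mem[OF b True] .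
        hence "F i (b - {i}) < chi 2 (DB i)" using F by blast
        moreover have "chi 2 (DB i) \<le> m" using m i(1) unfolding DB_def by blast
        ultimately show ?thesis using i nth True by simp
      qed (use i nth in simp)
    qed
    moreover have "wt (word b) = w" using wt_supp suppw[OF b] Bs b by simp
    ultimately show ?thesis unfolding J_def using len by simp
  qed
  have inj: "inj_on word B" by (metis inj_onI suppw)
  have dist: "2*w-3+1 \<le> hdist (word b) (word b')" if b: "b \<in> B" "b' \<in> B" "b \<noteq> b'" for b b'
  proof -
    define D where "D = {i. i < length (word b) \<and> word b ! i \<noteq> word b' ! i}"
    have bN: "b \<subseteq> {0..<n}" "b' \<subseteq> {0..<n}" "card b = w" "card b' = w" using Bs b by auto
    have fin: "finite b" "finite b'" using bN finite_subset by auto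
    have s: "card (b \<inter> b') < 3" using steiner_inter[OF S b] .
    have u: "card (b \<union> b') + card (b \<inter> b') = 2*w" using card_Un_Int[OF fin] bN by simp
    have finD: "finite D" unfolding D_def by simp
    have sub1: "(b \<union> b') - (b \<inter> b') \<subseteq> D" unfolding D_def using bN len nth by auto
    have c1: "card ((b \<union> b') - (b \<inter> b')) = card (b \<union> b') - card (b \<inter> b')"
      by (rule card_Diff_subset) (use fin in auto)
    show ?thesis
    proof (cases "card (b \<inter> b') = 2")
      case False
      have "card ((b \<union> b') - (b \<inter> b')) \<le> card D" by (rule card_mono[OF finD sub1])
      thus ?thesis unfolding hdist_def D_def[symmetric] using c1 u s False w by linarith
    next
      case True
      have sub2: "b \<inter> b' \<subseteq> D"
      proof
        fix i assume i: "i \<in> b \<inter> b'"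
        have d1: "b - {i} \<in> DB i" "b' - {i} \<in> DB i" unfolding DB_def using derived_mem[OF b(1)] derived_mem[OF b(2)] i by auto
        have ne: "b - {i} \<noteq> b' - {i}"
        proof
          assume "b - {i} = b' - {i}"
          hence "insert i (b - {i}) = insert i (b' - {i})" by simp
          thus False using i b(3) by (simp add: insert_absorb)
        qed
        have "(b - {i}) \<inter> (b' - {i}) = (b \<inter> b') - {i}" by blast
        hence "card ((b - {i}) \<inter> (b' - {i})) = 1" using True i fin by simp
        hence "F i (b - {i}) \<noteq> F i (b' - {i})" using F[of i] d1 ne by fastforce
        thus "i \<in> D" unfolding D_def using i bN len nth by auto
      qed
      have "b \<union> b' \<subseteq> D" using sub1 sub2 by blast
      hence "card (b \<union> b') \<le> card D" by (rule card_mono[OF finD])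
      thus ?thesis unfolding hdist_def D_def[symmetric] using u True w by linarith
    qed
  qed
  have "is_code (m+1) n w (2*w-3+1) (card B) (word ` B)"
    unfolding is_code_def
  proof (intro conjI)
    show "word ` B \<subseteq> J (m + 1) n w" using inJ by blast
    have "B \<subseteq> Pow {0..<n}" using Bs by blast
    hence "finite B" by (rule finite_subset) simp
    thus "finite (word ` B)" by simp
    show "card (word ` B) = card B" by (rule card_image[OF inj])
    show "\<forall>x\<in>word ` B. \<forall>y\<in>word ` B. x \<noteq> y \<longrightarrow> 2 * w - 3 + 1 \<le> hdist x y"
      using dist by blast
  qed
  thus ?thesis by blast
qed

lemma steiner_from_code:
  assumes w: "3 \<le> w" and c: "is_code q n w (2*w-3+1) M C" and M: "M * (w choose 3) = n choose 3"
  shows "steiner 3 w n {0..<n} (supp ` C)" "\<forall>p<n. chi 2 (derived_blocks (supp ` C) p) \<le> q - 1"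
proof -
  have CJ: "C \<subseteq> J q n w" and finC: "finite C" and cC: "card C = M"
    and d0: "\<forall>x\<in>C. \<forall>y\<in>C. x \<noteq> y \<longrightarrow> 2*w-3+1 \<le> hdist x y"
    using c unfolding is_code_def by auto
  have d: "2*w-2 \<le> hdist x y" if "x \<in> C" "y \<in> C" "x \<noteq> y" for x y
    using d0 that w by fastforce
  have K1: "card (supp x \<inter> supp y) \<le> 2" if "x \<in> C" "y \<in> C" "x \<noteq> y" for x y
    using key1[OF _ _ d[OF that] w] CJ that by blast
  have inj: "inj_on supp C"
  proof (rule inj_onI, rule ccontr)
    fix x y assume xy: "x \<in> C" "y \<in> C" "supp x = supp y" "x \<noteq> y"
    have "card (supp x) = w" using J_facts(3) CJ xy(1) by blast
    thus False using K1[OF xy(1,2,4)] xy(3) w by simp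
  qed
  define B where "B = supp ` C"
  have cB: "card B = M" unfolding B_def using card_image[OF inj] cC by simp
  have Bs: "\<forall>b\<in>B. b \<subseteq> {0..<n} \<and> card b = w" unfolding B_def using J_facts(3,4) CJ by blast
  have I: "\<forall>b\<in>B. \<forall>b'\<in>B. b \<noteq> b' \<longrightarrow> card (b \<inter> b') < 3"
    unfolding B_def using K1 by fastforce
  show "steiner 3 w n {0..<n} (supp ` C)"
    using steiner_of_pack[of "{0..<n}" n B w] Bs I cB M unfolding B_def by simp
  show "\<forall>p<n. chi 2 (derived_blocks (supp ` C) p) \<le> q - 1"
  proof (intro allI impI)
    fix p assume p: "p < n"
    define f where "f d = the_inv_into C supp (insert p d) ! p - 1" for d
    have repr: "\<exists>x\<in>C. p \<in> supp x \<and> d = supp x - {p} \<and> f d = x ! p - 1"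
      if dd: "d \<in> derived_blocks (supp ` C) p" for d
    proof -
      obtain x where x: "x \<in> C" "p \<in> supp x" "d = supp x - {p}"
        using dd unfolding derived_blocks_def by blast
      have "insert p d = supp x" using x by blast
      hence "f d = x ! p - 1" unfolding f_def using the_inv_into_f_f[OF inj x(1)] by simp
      thus ?thesis using x by blast
    qed
    show "chi 2 (derived_blocks (supp ` C) p) \<le> q - 1"
    proof (rule chi_le[of _ f])
      show "\<forall>b\<in>derived_blocks (supp ` C) p. f b < q - 1"
      proof
        fix d assume "d \<in> derived_blocks (supp ` C) p"
        then obtain x where x: "x \<in> C" "p \<in> supp x" "f d = x ! p - 1" using repr by blast
        have "x ! p \<in> set x" using x(2) unfolding supp_def by auto
        moreover have "set x \<subseteq> {0..<q}" using J_facts(2)[of x q n w] CJ x(1) by blast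
        ultimately have "x ! p < q" by auto
        moreover have "x ! p \<noteq> 0" using x(2) unfolding supp_def by auto
        ultimately show "f d < q - 1" using x(3) by linarith
      qed
      show "\<forall>b\<in>derived_blocks (supp ` C) p. \<forall>b'\<in>derived_blocks (supp ` C) p.
          b \<noteq> b' \<and> f b = f b' \<longrightarrow> card (b \<inter> b') \<le> 2 - 2"
      proof (intro ballI impI)
        fix d d' assume dd: "d \<in> derived_blocks (supp ` C) p" "d' \<in> derived_blocks (supp ` C) p"
          and ne: "d \<noteq> d' \<and> f d = f d'"
        obtain x where x: "x \<in> C" "p \<in> supp x" "d = supp x - {p}" "f d = x ! p - 1" using repr dd(1) by blast
        obtain y where y: "y \<in> C" "p \<in> supp y" "d' = supp y - {p}" "f d' = y ! p - 1" using repr dd(2) by blast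
        show "card (d \<inter> d') \<le> 2 - 2"
        proof (rule ccontr)
          assume "\<not> ?thesis"
          hence "d \<inter> d' \<noteq> {}" by auto
          then obtain j where j: "j \<in> d \<inter> d'" by blast
          have xy: "x \<noteq> y" using x y ne by blast
          have sub: "{p, j} \<subseteq> supp x \<inter> supp y" using x y j by blast
          have pj: "p \<noteq> j" using j x by blast
          have "card {p, j} \<le> card (supp x \<inter> supp y)"
            by (rule card_mono[OF _ sub]) (use J_facts(5) CJ x(1) in blast)
          hence "2 \<le> card (supp x \<inter> supp y)" using pj by simp
          hence "x ! p \<noteq> y ! p"
            using key2[OF _ _ d[OF x(1) y(1) xy] w] CJ x y by blast
          moreover have "x ! p \<noteq> 0" "y ! p \<noteq> 0" using x(2) y(2) unfolding supp_def by auto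
          ultimately show False using x(4) y(4) ne by simp
        qed
      qed
    qed
  qed
qed

theorem mainTheorem9:
  fixes w n :: nat
  assumes "3 \<le> w" and "w < n"
    and "\<exists>B :: nat set set. steiner 3 w n {0..<n} B"
  shows "q0' 3 w n =
    Min {Max ((\<lambda>x. chi 2 (derived_blocks B x)) ` {0..<n}) + 1 | B :: nat set set.
           steiner 3 w n {0..<n} B}"
proof -
  have w: "3 \<le> w" using assms(1) .
  obtain B0 :: "nat set set" where B0: "steiner 3 w n {0..<n} B0" using assms(3) by blast
  have "w choose 3 \<noteq> 0" using w binomial_eq_0_iff[of w 3] by linarith
  hence cw: "0 < w choose 3" by simp
  have "n choose 3 \<noteq> 0" using w assms(2) binomial_eq_0_iff[of n 3] by linarith
  hence cn: "0 < n choose 3" by simp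
  define M where "M = (n choose 3) div (w choose 3)"
  have cardS: "card B = M" if "steiner 3 w n {0..<n} B" for B :: "nat set set"
  proof -
    have "M = (card B * (w choose 3)) div (w choose 3)" unfolding M_def using steiner_card[OF that] by simp
    also have "\<dots> = card B" using cw by (rule div_mult_self_is_m)
    finally show ?thesis by simp
  qed
  have M: "M * (w choose 3) = n choose 3" using steiner_card[OF B0] cardS[OF B0] by simp
  have "M \<noteq> 0"
  proof
    assume "M = 0"
    hence "n choose 3 = 0" using M by simp
    thus False using cn by simp
  qed
  hence Mpos: "0 < M" by simp
  define g where "g B = Max ((\<lambda>x. chi 2 (derived_blocks B x)) ` {0..<n}) + 1" for B :: "nat set set"
  define X where "X = {g B | B :: nat set set. steiner 3 w n {0..<n} B}"
  have X_eq: "X = g ` {B. steiner 3 w n {0..<n} B}" unfolding X_def by blast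
  have "{B :: nat set set. steiner 3 w n {0..<n} B} \<subseteq> Pow (Pow {0..<n})"
  proof
    fix B :: "nat set set" assume "B \<in> {B. steiner 3 w n {0..<n} B}"
    hence "\<forall>b\<in>B. b \<subseteq> {0..<n} \<and> card b = w" using steinerD(3) by simp
    thus "B \<in> Pow (Pow {0..<n})" by blast
  qed
  hence "finite {B :: nat set set. steiner 3 w n {0..<n} B}" by (rule finite_subset) simp
  hence finX: "finite X" unfolding X_eq by (rule finite_imageI)
  have neX: "X \<noteq> {}" unfolding X_def using B0 by blast
  have n0: "{0..<n} \<noteq> {}" using assms(2) by simp
  define V where "V = Min X"
  have "V \<in> X" unfolding V_def using Min_in[OF finX neX] .
  then obtain B1 where B1: "steiner 3 w n {0..<n} B1" "V = g B1" unfolding X_def by blast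
  define m where "m = Max ((\<lambda>x. chi 2 (derived_blocks B1 x)) ` {0..<n})"
  have "\<forall>x<n. chi 2 (derived_blocks B1 x) \<le> m" unfolding m_def by (intro allI impI Max_ge) auto
  then obtain C where C: "is_code (m+1) n w (2*w-3+1) (card B1) C"
    using code_from_steiner[OF B1(1) w] by blast
  have Vm: "V = m + 1" using B1(2) unfolding g_def m_def by simp
  have PV: "\<exists>C. is_code V n w (2 * w - 3 + 1) ((n choose 3) div (w choose 3)) C"
    using C unfolding Vm cardS[OF B1(1)] M_def by blast
  have low: "V \<le> q" if hq: "\<exists>C. is_code q n w (2 * w - 3 + 1) ((n choose 3) div (w choose 3)) C" for q
  proof -
    obtain C where C: "is_code q n w (2 * w - 3 + 1) M C" using hq unfolding M_def by blast
    note sc = steiner_from_code[OF w C M]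
    have "card C = M" using C unfolding is_code_def by simp
    hence "C \<noteq> {}" using Mpos by auto
    then obtain x where x: "x \<in> C" by blast
    have xJ: "x \<in> J q n w" using C x unfolding is_code_def by blast
    have "card (supp x) = w" using J_facts(3)[OF xJ] .
    hence "supp x \<noteq> {}" using w by auto
    then obtain p where "p \<in> supp x" by blast
    hence "x ! p \<in> set x" unfolding supp_def by auto
    hence "x ! p \<in> {0..<q}" using J_facts(2)[OF xJ] by blast
    hence q1: "1 \<le> q" by simp
    have fI: "finite ((\<lambda>x. chi 2 (derived_blocks (supp ` C) x)) ` {0..<n})" by simp
    have neI: "(\<lambda>x. chi 2 (derived_blocks (supp ` C) x)) ` {0..<n} \<noteq> {}" using n0 by simp
    obtain p' where p': "p' \<in> {0..<n}"
      "Max ((\<lambda>x. chi 2 (derived_blocks (supp ` C) x)) ` {0..<n}) = chi 2 (derived_blocks (supp ` C) p')"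
      using Max_in[OF fI neI] unfolding image_iff by blast
    have "Max ((\<lambda>x. chi 2 (derived_blocks (supp ` C) x)) ` {0..<n}) \<le> q - 1"
      using sc(2) p' by simp
    hence "g (supp ` C) \<le> q" unfolding g_def using q1 by linarith
    moreover have "g (supp ` C) \<in> X" unfolding X_def using sc(1) by blast
    ultimately show ?thesis unfolding V_def using Min_le[OF finX] by (meson le_trans)
  qed
  have "q0' 3 w n = V" unfolding q0'_def by (rule Least_equality[where P="\<lambda>q. \<exists>C. is_code q n w (2 * w - 3 + 1) ((n choose 3) div (w choose 3)) C", OF PV low])
  thus ?thesis unfolding V_def X_def g_def .
qed

end
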